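(* Every chain complex $\mathcal{A}$ over $\mathbb{F}_2$ has a lift to some chain complex $\tilde{\mathcal{A}}$ over $\mathbb{Z}$. Further, the lift can be chosen so that $\tilde{\mathcal{A}}$ has no torsion in its homology or cohomology and has the same Betti numbers as $\mathcal{A}$, i.e. $H_j(\tilde{\mathcal{A}})$ and $H^j(\tilde{\mathcal{A}})$ are both isomorphic to $\mathbb{Z}^{b_j(\mathcal{A})}$, where $b_j(\mathcal{A})$ are the $\mathbb{F}_2$ Betti numbers of $\mathcal{A}$.
   Context: A chain complex $\mathcal{A}$ over $\mathbb{F}_2$ consists of finite-dimensional vector spaces $\mathcal{A}_j$ with preferred bases and boundary maps $\partial_j:\mathcal{A}_j\to\mathcal{A}_{j-1}$ (matrices with entries in $\{0,1\}$) with $\partial_{j}\partial_{j+1}=0$. A lift is a chain complex over $\mathbb{Z}$ on free modules with the same bases, given by integer matrices $\tilde\partial_j$ of the same sizes with each entry congruent mod $2$ to the corresponding entry of $\partial_j$, satisfying $\tilde\partial_j\tilde\partial_{j+1}=0$ over $\mathbb{Z}$. *)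

theory Defs
  imports "HOL-Algebra.Coset" "HOL-Library.Z2" "HOL-Library.Function_Algebras" "HOL.Vector_Spaces"
begin

text \<open>Column vectors of length n over a ring: functions nat => 'a vanishing from index n on
  (coordinates w.r.t. the preferred basis e_0, ..., e_(n-1)).\<close>
definition fvec :: "nat \<Rightarrow> (nat \<Rightarrow> 'a::zero) set" where
  "fvec n = {v. \<forall>i\<ge>n. v i = 0}"

definition matvec :: "nat \<Rightarrow> nat \<Rightarrow> (nat \<Rightarrow> nat \<Rightarrow> 'a::comm_ring_1) \<Rightarrow> (nat \<Rightarrow> 'a) \<Rightarrow> (nat \<Rightarrow> 'a)" where
  "matvec m n M v = (\<lambda>i. if i < m then (\<Sum>l<n. M i l * v l) else 0)"

definition transp :: "(nat \<Rightarrow> nat \<Rightarrow> 'a) \<Rightarrow> (nat \<Rightarrow> nat \<Rightarrow> 'a)" where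
  "transp M = (\<lambda>i k. M k i)"

text \<open>Chain complex over a commutative ring with preferred bases: A_j has dimension d j (j :: int),
  boundary map \<partial>_j : A_j -> A_(j-1) is the (d (j-1)) x (d j) matrix D j, and \<partial>_j \<partial>_(j+1) = 0.\<close>
definition is_chain_complex :: "(int \<Rightarrow> nat) \<Rightarrow> (int \<Rightarrow> nat \<Rightarrow> nat \<Rightarrow> 'a::comm_ring_1) \<Rightarrow> bool" where
  "is_chain_complex d D \<longleftrightarrow>
     (\<forall>j. \<forall>i < d (j - 1). \<forall>k < d (j + 1). (\<Sum>l < d j. D j i l * D (j + 1) l k) = 0)"

definition cycles :: "nat \<Rightarrow> nat \<Rightarrow> (nat \<Rightarrow> nat \<Rightarrow> 'a::comm_ring_1) \<Rightarrow> (nat \<Rightarrow> 'a) set" where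
  "cycles m n M = {v \<in> fvec n. matvec m n M v = (\<lambda>_. 0)}"

definition boundaries :: "nat \<Rightarrow> nat \<Rightarrow> (nat \<Rightarrow> nat \<Rightarrow> 'a::comm_ring_1) \<Rightarrow> (nat \<Rightarrow> 'a) set" where
  "boundaries n k N = matvec n k N ` fvec k"

definition Zgrp :: "nat \<Rightarrow> (nat \<Rightarrow> int) monoid" where
  "Zgrp n = \<lparr>carrier = fvec n, mult = (\<lambda>u v. (\<lambda>i. u i + v i)), one = (\<lambda>_. 0)\<rparr>"

definition int_homology :: "(int \<Rightarrow> nat) \<Rightarrow> (int \<Rightarrow> nat \<Rightarrow> nat \<Rightarrow> int) \<Rightarrow> int \<Rightarrow> (nat \<Rightarrow> int) set monoid" where
  "int_homology d L j =
     ((Zgrp (d j))\<lparr>carrier := cycles (d (j - 1)) (d j) (L j)\<rparr>)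
       Mod boundaries (d j) (d (j + 1)) (L (j + 1))"

text \<open>Integral cohomology H^j = ker \<delta>^j / im \<delta>^(j-1) of the dual cochain complex Hom(-, Z),
  where with respect to the dual bases \<delta>^j : C^j -> C^(j+1) is the transpose of \<partial>_(j+1).\<close>
definition int_cohomology :: "(int \<Rightarrow> nat) \<Rightarrow> (int \<Rightarrow> nat \<Rightarrow> nat \<Rightarrow> int) \<Rightarrow> int \<Rightarrow> (nat \<Rightarrow> int) set monoid" where
  "int_cohomology d L j =
     ((Zgrp (d j))\<lparr>carrier := cycles (d (j + 1)) (d j) (transp (L (j + 1)))\<rparr>)
       Mod boundaries (d j) (d (j - 1)) (transp (L j))"

definition betti_F2 :: "(int \<Rightarrow> nat) \<Rightarrow> (int \<Rightarrow> nat \<Rightarrow> nat \<Rightarrow> bit) \<Rightarrow> int \<Rightarrow> nat" where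
  "betti_F2 d D j =
     vector_space.dim (\<lambda>(c::bit) v. (\<lambda>i. c * v i)) (cycles (d (j - 1)) (d j) (D j))
     - vector_space.dim (\<lambda>(c::bit) v. (\<lambda>i. c * v i)) (boundaries (d j) (d (j + 1)) (D (j + 1)))"

definition is_lift :: "(int \<Rightarrow> nat) \<Rightarrow> (int \<Rightarrow> nat \<Rightarrow> nat \<Rightarrow> bit) \<Rightarrow> (int \<Rightarrow> nat \<Rightarrow> nat \<Rightarrow> int) \<Rightarrow> bool" where
  "is_lift d D L \<longleftrightarrow>
     (\<forall>j. \<forall>i < d (j - 1). \<forall>k < d j. of_int (L j i k) = D j i k) \<and> is_chain_complex d L"

end

theory Submission
  imports Defs
begin

definition mm :: "nat \<Rightarrow> (nat \<Rightarrow> nat \<Rightarrow> 'a::comm_ring_1) \<Rightarrow> (nat \<Rightarrow> nat \<Rightarrow> 'a) \<Rightarrow> nat \<Rightarrow> nat \<Rightarrow> 'a" where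
  "mm p A B = (\<lambda>i k. \<Sum>l<p. A i l * B l k)"

definition idm :: "nat \<Rightarrow> nat \<Rightarrow> 'a::comm_ring_1" where
  "idm = (\<lambda>i k. if i = k then 1 else 0)"

definition red :: "(nat \<Rightarrow> nat \<Rightarrow> int) \<Rightarrow> nat \<Rightarrow> nat \<Rightarrow> bit" where
  "red A = (\<lambda>i k. of_int (A i k))"

definition inv_pair :: "nat \<Rightarrow> (nat \<Rightarrow> nat \<Rightarrow> 'a::comm_ring_1) \<Rightarrow> (nat \<Rightarrow> nat \<Rightarrow> 'a) \<Rightarrow> bool" where
  "inv_pair n U V \<longleftrightarrow> (\<forall>i<n. \<forall>k<n. mm n U V i k = idm i k \<and> mm n V U i k = idm i k)"

definition injm :: "nat \<Rightarrow> (nat \<Rightarrow> nat \<Rightarrow> 'a::comm_ring_1) \<Rightarrow> bool" where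
  "injm n P \<longleftrightarrow> (\<forall>x. (\<forall>l\<ge>n. x l = 0) \<longrightarrow> (\<forall>i<n. (\<Sum>l<n. P i l * x l) = 0) \<longrightarrow> (\<forall>l. x l = 0))"

lemma mm_assoc: "mm q (mm p A B) C = mm p A (mm q B C)"
  unfolding mm_def
  by (auto simp: fun_eq_iff sum_distrib_left sum_distrib_right mult.assoc intro: sum.swap)

lemma mm_idm_left: "i < p \<Longrightarrow> mm p idm A i k = A i k"
proof -
  have "mm p idm A i k = (\<Sum>l<p. if i = l then A l k else 0)"
    unfolding mm_def idm_def by (rule sum.cong) auto
  also assume "i < p"
  then have "(\<Sum>l<p. if i = l then A l k else 0) = A i k" by (simp add: sum.delta)
  finally show ?thesis .
qed

lemma mm_idm_right: "k < p \<Longrightarrow> mm p A idm i k = A i k"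
proof -
  have "mm p A idm i k = (\<Sum>l<p. if l = k then A i l else 0)"
    unfolding mm_def idm_def by (rule sum.cong) auto
  also assume "k < p"
  then have "(\<Sum>l<p. if l = k then A i l else 0) = A i k" by (simp add: sum.delta')
  finally show ?thesis .
qed

lemma mm_cong: "(\<And>l. l < p \<Longrightarrow> A i l = A' i l) \<Longrightarrow> (\<And>l. l < p \<Longrightarrow> B l k = B' l k)
   \<Longrightarrow> mm p A B i k = mm p A' B' i k"
  unfolding mm_def by (auto intro: sum.cong)

lemma red_mm: "red (mm p A B) = mm p (red A) (red B)"
  unfolding red_def mm_def by (simp add: fun_eq_iff)

lemma red_idm: "red idm = idm"
  unfolding red_def idm_def by (simp add: fun_eq_iff)

lemma matvec_mm: "matvec m n (mm p A B) v = matvec m p A (matvec p n B v)"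
  unfolding matvec_def mm_def
  by (auto simp: fun_eq_iff sum_distrib_left sum_distrib_right mult.assoc intro: sum.swap)

lemma sum_mm_vec: "(\<Sum>l<n. mm p A B i l * x l) = (\<Sum>m<p. A i m * (\<Sum>l<n. B m l * x l))"
  unfolding mm_def
  by (auto simp: sum_distrib_left sum_distrib_right mult.assoc intro: sum.swap)

lemma inv_pair_idm: "inv_pair n idm idm"
  unfolding inv_pair_def by (simp add: mm_idm_left)

lemma inv_pair_comp:
  assumes "inv_pair n A A'" "inv_pair n B B'"
  shows "inv_pair n (mm n A B) (mm n B' A')"
proof -
  have 1: "mm n (mm n A B) (mm n B' A') i k = idm i k" if "i < n" "k < n" for i k
  proof -
    have "mm n (mm n A B) (mm n B' A') i k = mm n A (mm n (mm n B B') A') i k"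
      by (simp add: mm_assoc)
    also have "\<dots> = mm n A A' i k"
    proof (rule mm_cong)
      fix l assume l: "l < n"
      have "mm n (mm n B B') A' l k = mm n idm A' l k"
        by (rule mm_cong) (use assms l in \<open>auto simp: inv_pair_def\<close>)
      then show "mm n (mm n B B') A' l k = A' l k" using l by (simp add: mm_idm_left)
    qed simp
    finally show ?thesis using assms that by (simp add: inv_pair_def)
  qed
  have 2: "mm n (mm n B' A') (mm n A B) i k = idm i k" if "i < n" "k < n" for i k
  proof -
    have "mm n (mm n B' A') (mm n A B) i k = mm n B' (mm n (mm n A' A) B) i k"
      by (simp add: mm_assoc)
    also have "\<dots> = mm n B' B i k"
    proof (rule mm_cong)
      fix l assume l: "l < n"
      have "mm n (mm n A' A) B l k = mm n idm B l k"
        by (rule mm_cong) (use assms l in \<open>auto simp: inv_pair_def\<close>)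
      then show "mm n (mm n A' A) B l k = B l k" using l by (simp add: mm_idm_left)
    qed simp
    finally show ?thesis using assms that by (simp add: inv_pair_def)
  qed
  show ?thesis using 1 2 by (simp add: inv_pair_def)
qed

declare add_bit_eq_xor[simp del] mult_bit_eq_and[simp del]

definition sw :: "nat \<Rightarrow> nat \<Rightarrow> nat \<Rightarrow> nat" where
  "sw r k a = (if a = r then k else if a = k then r else a)"

definition swm :: "nat \<Rightarrow> nat \<Rightarrow> nat \<Rightarrow> nat \<Rightarrow> 'a::comm_ring_1" where
  "swm r k = (\<lambda>a b. if sw r k a = b then 1 else 0)"

definition tvm :: "nat \<Rightarrow> (nat \<Rightarrow> 'a::comm_ring_1) \<Rightarrow> nat \<Rightarrow> nat \<Rightarrow> 'a" where
  "tvm k c = (\<lambda>a b. idm a b + (if b = k \<and> a \<noteq> k then c a else 0))"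

definition liftb :: "bit \<Rightarrow> int" where
  "liftb b = (if b = 1 then 1 else 0)"

lemma of_int_liftb[simp]: "(of_int (liftb b) :: bit) = b"
  by (cases b) (auto simp: liftb_def)

lemma sw_sw[simp]: "sw r k (sw r k a) = a"
  unfolding sw_def by auto

lemma sw_lt: "r < n \<Longrightarrow> k < n \<Longrightarrow> a < n \<Longrightarrow> sw r k a < n"
  unfolding sw_def by auto

lemma sum_swm: assumes "i < n" "r < n" "k < n"
  shows "(\<Sum>m<n. swm r k i m * y m) = y (sw r k i)"
proof -
  have "(\<Sum>m<n. swm r k i m * y m) = (\<Sum>m<n. if sw r k i = m then y m else 0)"
    unfolding swm_def by (rule sum.cong) auto
  also have "\<dots> = y (sw r k i)" using assms sw_lt[OF assms(2,3,1)] by (simp add: sum.delta)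
  finally show ?thesis .
qed

lemma sum_tvm: assumes "i < n" "k < n"
  shows "(\<Sum>m<n. tvm k c i m * y m) = y i + (if i \<noteq> k then c i * y k else 0)"
proof -
  have "(\<Sum>m<n. tvm k c i m * y m) = (\<Sum>m<n. (if i = m then y m else 0) + (if m = k then (if i \<noteq> k then c i * y k else 0) else 0))"
    unfolding tvm_def idm_def by (rule sum.cong) (auto simp: algebra_simps)
  also have "\<dots> = y i + (if i \<noteq> k then c i * y k else 0)"
    using assms by (simp add: sum.distrib sum.delta sum.delta')
  finally show ?thesis .
qed

lemma mm_swm: "i < n \<Longrightarrow> r < n \<Longrightarrow> k < n \<Longrightarrow> mm n (swm r k) A i j = A (sw r k i) j"
  unfolding mm_def using sum_swm[of i n r k "\<lambda>m. A m j"] by simp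

lemma mm_tvm: "i < n \<Longrightarrow> k < n \<Longrightarrow> mm n (tvm k c) A i j = A i j + (if i \<noteq> k then c i * A k j else 0)"
  unfolding mm_def using sum_tvm[of i n k c "\<lambda>m. A m j"] by simp

lemma inv_pair_swm: assumes "r < n" "k < n" shows "inv_pair n (swm r k) (swm r k)"
  unfolding inv_pair_def using assms
  by (auto simp: mm_swm sw_lt) (auto simp: swm_def idm_def sw_def)

lemma inv_pair_tvm: assumes "k < n" shows "inv_pair n (tvm k c) (tvm k (\<lambda>a. - c a))"
  unfolding inv_pair_def using assms
  by (auto simp: mm_tvm) (auto simp: tvm_def idm_def)

lemma red_swm: "red (swm r k) = swm r k"
  unfolding red_def swm_def by (simp add: fun_eq_iff)

lemma red_tvm: "red (tvm k (\<lambda>a. liftb (c a))) = tvm k c"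
  unfolding red_def tvm_def idm_def by (simp add: fun_eq_iff)

lemma bit_add_self[simp]: "(x::bit) + x = 0"
  by (cases x) simp_all

lemma pivot_exists:
  fixes P :: "nat \<Rightarrow> nat \<Rightarrow> bit"
  assumes inj: "injm n P" and idc: "\<forall>c<k. \<forall>i<n. P i c = idm i c" and kn: "k < n"
  shows "\<exists>r. k \<le> r \<and> r < n \<and> P r k = 1"
proof (rule ccontr)
  assume none: "\<not> ?thesis"
  define x where "x = (\<lambda>l. if l = k then 1 else if l < k then P l k else (0::bit))"
  have xz: "\<forall>l\<ge>n. x l = 0" using kn by (auto simp: x_def)
  have "(\<Sum>l<n. P i l * x l) = 0" if i: "i < n" for i
  proof -
    have "(\<Sum>l<n. P i l * x l) = (\<Sum>l<n. (if l = k then P i k else 0) + (if l = i then (if i < k then P i k else 0) else 0))"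
    proof (rule sum.cong)
      fix l assume l: "l \<in> {..<n}"
      show "P i l * x l = (if l = k then P i k else 0) + (if l = i then (if i < k then P i k else 0) else 0)"
      proof (cases "l = k")
        case True then show ?thesis by (simp add: x_def)
      next
        case False
        show ?thesis
        proof (cases "l < k")
          case True
          then have "P i l = idm i l" using idc i by auto
          then show ?thesis using True False by (auto simp: x_def idm_def)
        next
          case False2: False
          then show ?thesis using False by (auto simp: x_def)
        qed
      qed
    qed simp
    also have "\<dots> = (\<Sum>l<n. if l = k then P i k else 0) + (\<Sum>l<n. if l = i then (if i < k then P i k else 0) else 0)"
      by (rule sum.distrib)
    also have "\<dots> = P i k + (if i < k then P i k else 0)"
      using i kn by (simp only: sum.delta finite_lessThan lessThan_iff if_True)
    also have "\<dots> = 0"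
    proof (cases "i < k")
      case True then show ?thesis by simp
    next
      case False then have "P i k \<noteq> 1" using none i by auto
      then show ?thesis using False by simp
    qed
    finally show ?thesis .
  qed
  then have "\<forall>l. x l = 0" using inj xz unfolding injm_def by blast
  then show False by (auto simp: x_def dest: spec[of _ k])
qed

lemma lift_main:
  assumes "k \<le> n"
  shows "\<forall>P::nat \<Rightarrow> nat \<Rightarrow> bit. injm n P \<and> (\<forall>c<k. \<forall>i<n. P i c = idm i c) \<longrightarrow>
     (\<exists>U V. inv_pair n U V \<and> (\<forall>i<n. \<forall>j<n. red U i j = P i j))"
  using assms
proof (induction k rule: inc_induct)
  case base
  show ?case
  proof (intro allI impI)
    fix P :: "nat \<Rightarrow> nat \<Rightarrow> bit" assume "injm n P \<and> (\<forall>c<n. \<forall>i<n. P i c = idm i c)"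
    then show "\<exists>U V. inv_pair n U V \<and> (\<forall>i<n. \<forall>j<n. red U i j = P i j)"
      by (intro exI[of _ idm]) (auto simp: inv_pair_idm red_idm)
  qed
next
  case (step k)
  show ?case
  proof (intro allI impI)
    fix P :: "nat \<Rightarrow> nat \<Rightarrow> bit" assume H: "injm n P \<and> (\<forall>c<k. \<forall>i<n. P i c = idm i c)"
    obtain r where r: "k \<le> r" "r < n" "P r k = 1" using pivot_exists[of n P k] H step.hyps by auto
    have kn: "k < n" using step.hyps by simp
    define P1 where "P1 = mm n (swm r k) P"
    define c where "c = (\<lambda>a. if a \<noteq> k then P1 a k else 0)"
    define P2 where "P2 = mm n (tvm k c) P1"
    have P1e: "P1 i j = P (sw r k i) j" if "i < n" for i j
      unfolding P1_def using mm_swm[OF that r(2) kn] .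
    have P2e: "P2 i j = P1 i j + (if i \<noteq> k then c i * P1 k j else 0)" if "i < n" for i j
      unfolding P2_def using mm_tvm[OF that kn] .
    have P1kk: "P1 k k = 1" using P1e[OF kn] r by (cases "k = r") (auto simp: sw_def)
    have idc2: "\<forall>c'<Suc k. \<forall>i<n. P2 i c' = idm i c'"
    proof (intro allI impI)
      fix c' i assume c': "c' < Suc k" and i: "i < n"
      show "P2 i c' = idm i c'"
      proof (cases "c' = k")
        case True
        then show ?thesis using P2e[OF i] P1kk by (auto simp: c_def idm_def)
      next
        case False
        then have c'k: "c' < k" using c' by simp
        have "P1 k c' = P r c'" using P1e[OF kn] by (simp add: sw_def)
        also have "\<dots> = 0" using H c'k r by (auto simp: idm_def)
        finally have "P1 k c' = 0" .
        then have "P2 i c' = P1 i c'" using P2e[OF i] by simp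
        also have "\<dots> = P (sw r k i) c'" using P1e[OF i] .
        also have "\<dots> = idm (sw r k i) c'" using H c'k sw_lt[OF r(2) kn i] by auto
        also have "\<dots> = idm i c'" using c'k r(1) by (auto simp: idm_def sw_def)
        finally show ?thesis .
      qed
    qed
    have inj2: "injm n P2"
      unfolding injm_def
    proof (intro allI impI)
      fix x :: "nat \<Rightarrow> bit" and l0 :: nat assume xz: "\<forall>l\<ge>n. x l = 0" and h: "\<forall>i<n. (\<Sum>l<n. P2 i l * x l) = 0"
      define y where "y = (\<lambda>m. \<Sum>l<n. P1 m l * x l)"
      have P2y: "(\<Sum>l<n. P2 i l * x l) = y i + (if i \<noteq> k then c i * y k else 0)" if "i < n" for i
        unfolding P2_def sum_mm_vec using sum_tvm[OF that kn, of c y] by (simp add: y_def)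
      then have yk: "y k = 0" using h kn by fastforce
      have y0: "y i = 0" if "i < n" for i
      proof -
        have "y i + (if i \<noteq> k then c i * y k else 0) = 0" using h that P2y[OF that] by metis
        moreover have "(if i \<noteq> k then c i * y k else 0) = 0" using yk by simp
        ultimately show ?thesis by (metis add.right_neutral)
      qed
      have "(\<Sum>l<n. P i l * x l) = 0" if i: "i < n" for i
      proof -
        have "y (sw r k i) = (\<Sum>m<n. swm r k (sw r k i) m * (\<Sum>l<n. P m l * x l))"
          unfolding y_def P1_def sum_mm_vec ..
        also have "\<dots> = (\<Sum>l<n. P i l * x l)"
          using sum_swm[OF sw_lt[OF r(2) kn i] r(2) kn, of "\<lambda>m. \<Sum>l<n. P m l * x l"] by simp
        finally show ?thesis using y0[OF sw_lt[OF r(2) kn i]] by simp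
      qed
      then show "x l0 = 0" using H xz unfolding injm_def by blast
    qed
    obtain U2 V2 where UV2: "inv_pair n U2 V2" "\<forall>i<n. \<forall>j<n. red U2 i j = P2 i j"
      using step.IH inj2 idc2 by blast
    define cz where "cz = (\<lambda>a. liftb (c a))"
    define U where "U = mm n (swm r k) (mm n (tvm k cz) U2)"
    define V where "V = mm n (mm n V2 (tvm k (\<lambda>a. - cz a))) (swm r k)"
    have inv: "inv_pair n U V"
      unfolding U_def V_def
      by (intro inv_pair_comp inv_pair_swm inv_pair_tvm UV2 r kn)
    have "red U i j = P i j" if i: "i < n" and j: "j < n" for i j
    proof -
      have "red U i j = mm n (swm r k) (mm n (tvm k c) (red U2)) i j"
        unfolding U_def red_mm red_swm cz_def red_tvm ..
      also have "\<dots> = mm n (tvm k c) (red U2) (sw r k i) j"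
        using mm_swm[OF i r(2) kn] .
      also have "\<dots> = mm n (tvm k c) P2 (sw r k i) j"
        by (rule mm_cong) (use UV2 j in auto)
      also have "\<dots> = P2 (sw r k i) j + (if sw r k i \<noteq> k then c (sw r k i) * P2 k j else 0)"
        using mm_tvm[OF sw_lt[OF r(2) kn i] kn] .
      also have "\<dots> = P1 (sw r k i) j"
        using P2e[OF sw_lt[OF r(2) kn i]] P2e[OF kn] by (simp add: c_def)
      also have "\<dots> = P i j" using P1e[OF sw_lt[OF r(2) kn i]] by simp
      finally show ?thesis .
    qed
    then show "\<exists>U V. inv_pair n U V \<and> (\<forall>i<n. \<forall>j<n. red U i j = P i j)"
      using inv by blast
  qed
qed

lemma lift_unimodular:
  fixes P :: "nat \<Rightarrow> nat \<Rightarrow> bit"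
  assumes "injm n P"
  shows "\<exists>U V. inv_pair n U V \<and> (\<forall>i<n. \<forall>j<n. red U i j = P i j)"
  using lift_main[of 0 n] assms by auto

lemma matvec_fvec[simp]: "matvec m n M v \<in> fvec m"
  unfolding matvec_def fvec_def by auto

lemma matvec_add: "matvec m n M (\<lambda>i. u i + v i) = (\<lambda>i. matvec m n M u i + matvec m n M v i)"
  unfolding matvec_def by (auto simp: fun_eq_iff algebra_simps sum.distrib)

lemma matvec_zero[simp]: "matvec m n M (\<lambda>_. 0) = (\<lambda>_. 0)"
  unfolding matvec_def by auto

lemma matvec_neg: "matvec m n M (\<lambda>i. - u i) = (\<lambda>i. - matvec m n M u i)"
  unfolding matvec_def by (auto simp: fun_eq_iff sum_negf)

lemma matvec_inv:
  assumes "inv_pair n U V" "v \<in> fvec n"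
  shows "matvec n n U (matvec n n V v) = v"
proof -
  have "matvec n n U (matvec n n V v) = matvec n n (mm n U V) v" by (simp add: matvec_mm)
  also have "\<dots> = v"
  proof
    fix i show "matvec n n (mm n U V) v i = v i"
    proof (cases "i < n")
      case True
      have "(\<Sum>l<n. mm n U V i l * v l) = (\<Sum>l<n. if i = l then v l else 0)"
        by (rule sum.cong) (use assms True in \<open>auto simp: inv_pair_def idm_def\<close>)
      also have "\<dots> = v i" using True by (simp add: sum.delta)
      finally show ?thesis using True by (simp add: matvec_def)
    next
      case False then show ?thesis using assms(2) by (simp add: matvec_def fvec_def)
    qed
  qed
  finally show ?thesis .
qed

lemma Zgrp_group: "group (Zgrp n)"
proof (rule groupI)
  fix x assume "x \<in> carrier (Zgrp n)"
  then show "\<exists>y\<in>carrier (Zgrp n). y \<otimes>\<^bsub>Zgrp n\<^esub> x = \<one>\<^bsub>Zgrp n\<^esub>"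
    by (intro bexI[of _ "\<lambda>i. - x i"]) (auto simp: Zgrp_def fvec_def)
qed (auto simp: Zgrp_def fvec_def algebra_simps)

lemma gen_homology:
  fixes M S :: "nat \<Rightarrow> nat \<Rightarrow> int" and N T :: "nat \<Rightarrow> nat \<Rightarrow> int"
  assumes AA: "inv_pair n A A'" and BB: "inv_pair m B B'" and CC: "inv_pair k C C'"
    and M: "\<And>v. matvec m n M v = matvec m m B (matvec m n S (matvec n n A' v))"
    and N: "\<And>v. matvec n k N v = matvec n n A (matvec n k T (matvec k k C' v))"
    and H1: "\<And>w. w \<in> fvec n \<Longrightarrow> matvec m n S w = (\<lambda>_. 0) \<Longrightarrow> (\<forall>i<h. w (e + i) = 0) \<Longrightarrow> \<exists>u\<in>fvec k. matvec n k T u = w"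
    and H2: "\<And>u i. i < h \<Longrightarrow> matvec n k T u (e + i) = 0"
    and H3: "\<And>w. w \<in> fvec n \<Longrightarrow> (\<forall>l. l < e \<or> e + h \<le> l \<longrightarrow> w l = 0) \<Longrightarrow> matvec m n S w = (\<lambda>_. 0)"
    and H4: "\<And>u. matvec m n S (matvec n k T u) = (\<lambda>_. 0)"
    and eh: "e + h \<le> n"
  shows "((Zgrp n)\<lparr>carrier := cycles m n M\<rparr>) Mod boundaries n k N \<cong> Zgrp h"
proof -
  define Z where "Z = cycles m n M"
  define G where "G = (Zgrp n)\<lparr>carrier := Z\<rparr>"
  define hm where "hm = (\<lambda>v. \<lambda>i. if i < h then matvec n n A' v (e + i) else (0::int))"
  have Zadd: "(\<lambda>i. u i + v i) \<in> Z" if "u \<in> Z" "v \<in> Z" for u v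
    using that unfolding Z_def cycles_def fvec_def by (auto simp: matvec_add)
  have Zneg: "(\<lambda>i. - u i) \<in> Z" if "u \<in> Z" for u
    using that unfolding Z_def cycles_def fvec_def by (auto simp: matvec_neg)
  have Z0: "(\<lambda>_. 0) \<in> Z" unfolding Z_def cycles_def fvec_def by auto
  have gG: "group G"
    unfolding G_def
    by (rule groupI) (auto simp: Zgrp_def Z0 Zadd algebra_simps intro!: bexI[of _ "\<lambda>i. - _ i"] Zneg)
  have hom: "hm \<in> hom G (Zgrp h)"
    unfolding hom_def G_def hm_def by (auto simp: Zgrp_def fvec_def matvec_add fun_eq_iff)
  interpret gh: group_hom G "Zgrp h" hm
    by (intro group_hom.intro group_hom_axioms.intro gG Zgrp_group hom)
  have onto: "hm ` carrier G = carrier (Zgrp h)"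
  proof
    show "hm ` carrier G \<subseteq> carrier (Zgrp h)" unfolding hm_def by (auto simp: Zgrp_def fvec_def)
    show "carrier (Zgrp h) \<subseteq> hm ` carrier G"
    proof
      fix y assume y: "y \<in> carrier (Zgrp h)"
      define w where "w = (\<lambda>l. if e \<le> l \<and> l < e + h then y (l - e) else 0)"
      have w: "w \<in> fvec n" using eh by (auto simp: w_def fvec_def)
      define v where "v = matvec n n A w"
      have Av: "matvec n n A' v = w" unfolding v_def using matvec_inv[OF _ w] AA
        by (auto simp: inv_pair_def)
      have "matvec m n M v = (\<lambda>_. 0)" unfolding M Av using H3[OF w] by (auto simp: w_def)
      then have vZ: "v \<in> carrier G" by (auto simp: G_def Z_def cycles_def v_def)
      have "hm v = y" using y by (auto simp: hm_def Av w_def Zgrp_def fvec_def fun_eq_iff)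
      then show "y \<in> hm ` carrier G" using vZ by blast
    qed
  qed
  have ker: "kernel G (Zgrp h) hm = boundaries n k N"
  proof
    show "kernel G (Zgrp h) hm \<subseteq> boundaries n k N"
    proof
      fix v assume "v \<in> kernel G (Zgrp h) hm"
      then have vZ: "v \<in> Z" and hv: "hm v = (\<lambda>_. 0)" by (auto simp: kernel_def G_def Zgrp_def)
      define w where "w = matvec n n A' v"
      have w: "w \<in> fvec n" by (simp add: w_def)
      have "matvec m m B (matvec m n S w) = (\<lambda>_. 0)" using vZ by (simp add: Z_def cycles_def M w_def)
      then have "matvec m m B' (matvec m m B (matvec m n S w)) = (\<lambda>_. 0)" by simp
      then have Sw: "matvec m n S w = (\<lambda>_. 0)" using matvec_inv[of m B' B] BB
        by (auto simp: inv_pair_def)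
      have "\<forall>i<h. w (e + i) = 0" using hv unfolding hm_def w_def by (metis)
      then obtain u where u: "u \<in> fvec k" "matvec n k T u = w" using H1[OF w Sw] by blast
      have "v = matvec n n A w" unfolding w_def using matvec_inv[of n A A' v] AA vZ
        by (auto simp: Z_def cycles_def)
      also have "\<dots> = matvec n n A (matvec n k T (matvec k k C' (matvec k k C u)))"
        using matvec_inv[of k C' C u] CC u by (auto simp: inv_pair_def)
      also have "\<dots> = matvec n k N (matvec k k C u)" by (simp add: N)
      finally show "v \<in> boundaries n k N" unfolding boundaries_def by auto
    qed
    show "boundaries n k N \<subseteq> kernel G (Zgrp h) hm"
    proof
      fix v assume "v \<in> boundaries n k N"
      then obtain x where x: "x \<in> fvec k" "v = matvec n k N x" unfolding boundaries_def by auto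
      define u where "u = matvec k k C' x"
      have v: "v = matvec n n A (matvec n k T u)" using x by (simp add: N u_def)
      have A'v: "matvec n n A' v = matvec n k T u" unfolding v using matvec_inv[of n A' A] AA
        by (auto simp: inv_pair_def)
      have "matvec m n M v = (\<lambda>_. 0)" unfolding M A'v H4 by simp
      then have "v \<in> Z" using v by (auto simp: Z_def cycles_def)
      moreover have "hm v = (\<lambda>_. 0)" unfolding hm_def A'v using H2 by auto
      ultimately show "v \<in> kernel G (Zgrp h) hm" by (auto simp: kernel_def G_def Zgrp_def)
    qed
  qed
  have "G Mod kernel G (Zgrp h) hm \<cong> Zgrp h" using gh.FactGroup_iso[OF onto] .
  then have "G Mod boundaries n k N \<cong> Zgrp h" by (simp only: ker)
  then show ?thesis by (simp only: G_def Z_def)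
qed

definition Sm :: "nat \<Rightarrow> nat \<Rightarrow> nat \<Rightarrow> 'a::comm_ring_1" where
  "Sm E = (\<lambda>a b. if E \<le> b \<and> a = b - E then 1 else 0)"

lemma matvec_Sm: "matvec m n (Sm E) w a = (if a < m \<and> E + a < n then w (E + a) else 0)"
proof -
  have "(\<Sum>l<n. Sm E a l * w l) = (\<Sum>l<n. if l = E + a then w l else 0)"
    by (rule sum.cong) (auto simp: Sm_def)
  then show ?thesis by (simp add: matvec_def sum.delta')
qed

lemma matvec_tSm: "matvec m n (transp (Sm E)) w a = (if a < m \<and> E \<le> a \<and> a - E < n then w (a - E) else 0)"
proof -
  have "(\<Sum>l<n. transp (Sm E) a l * w l) = (\<Sum>l<n. if l = a - E then (if E \<le> a then w l else 0) else 0)"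
    by (rule sum.cong) (auto simp: Sm_def transp_def)
  then show ?thesis by (simp add: matvec_def sum.delta')
qed

lemma transp_mm: "transp (mm p A B) = mm p (transp B) (transp A)"
  unfolding transp_def mm_def by (simp add: fun_eq_iff mult.commute)

lemma inv_pair_transp: "inv_pair n U V \<Longrightarrow> inv_pair n (transp V) (transp U)"
  unfolding inv_pair_def
  by (metis transp_mm transp_def idm_def)

lemma mm_inv_left: assumes "inv_pair n U V" "l < n" shows "mm n (mm n V U) Z l k = Z l k"
proof -
  have "mm n (mm n V U) Z l k = mm n idm Z l k"
    by (rule mm_cong) (use assms in \<open>auto simp: inv_pair_def\<close>)
  then show ?thesis using assms(2) by (simp add: mm_idm_left)
qed

lemma chain_gen:
  assumes inv: "inv_pair n U2 V1" and SS: "\<And>a b. b < k \<Longrightarrow> mm n S S' a b = 0"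
  shows "mm n (mm m U1 (mm n S V1)) (mm n U2 (mm k S' V2)) i k' = 0"
proof -
  define Z where "Z = mm k S' V2"
  have "mm n (mm m U1 (mm n S V1)) (mm n U2 Z) i k' = mm m U1 (mm n S (mm n (mm n V1 U2) Z)) i k'"
    by (simp only: mm_assoc)
  also have "\<dots> = mm m U1 (mm n S Z) i k'"
  proof (rule mm_cong)
    fix l show "mm n S (mm n (mm n V1 U2) Z) l k' = mm n S Z l k'"
      by (rule mm_cong) (auto simp: mm_inv_left[OF inv])
  qed simp
  also have "mm n S Z = mm k (mm n S S') V2" unfolding Z_def by (simp only: mm_assoc)
  also have "mm m U1 (mm k (mm n S S') V2) i k' = 0"
    unfolding mm_def[of k] using SS by (simp add: mm_def)
  finally show ?thesis unfolding Z_def .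
qed

lemma SS0: assumes "b < e' + rj" "rj \<le> e" shows "mm n (Sm e) (Sm e') a b = 0"
  unfolding mm_def by (rule sum.neutral) (use assms in \<open>auto simp: Sm_def\<close>)

lemma partB:
  fixes d r h :: "int \<Rightarrow> nat" and U V :: "int \<Rightarrow> nat \<Rightarrow> nat \<Rightarrow> int"
  assumes dj: "\<And>j. d j = r j + h j + r (j - 1)" and inv: "\<And>j. inv_pair (d j) (U j) (V j)"
    and L: "L = (\<lambda>j. mm (d (j - 1)) (U (j - 1)) (mm (d j) (Sm (r j + h j)) (V j)))"
  shows "is_chain_complex d L \<and> (\<forall>j. int_homology d L j \<cong> Zgrp (h j) \<and> int_cohomology d L j \<cong> Zgrp (h j))"
proof -
  have chain: "mm (d j) (L j) (L (j + 1)) i k = 0" for j i k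
  proof -
    have 1: "L (j+1) = mm (d j) (U j) (mm (d (j+1)) (Sm (r (j+1) + h (j+1))) (V (j+1)))" by (simp add: L)
    have 2: "L j = mm (d (j - 1)) (U (j - 1)) (mm (d j) (Sm (r j + h j)) (V j))" by (simp add: L)
    show ?thesis unfolding 1 2
      by (rule chain_gen[OF inv], rule SS0[where rj = "r j"]) (use dj[of "j+1"] in auto)
  qed
  have cc: "is_chain_complex d L"
    unfolding is_chain_complex_def using chain by (simp add: mm_def)
  have hom: "int_homology d L j \<cong> Zgrp (h j)" for j
    unfolding int_homology_def
  proof (rule gen_homology[where A="U j" and A'="V j" and B="U (j-1)" and B'="V (j-1)"
        and C="U (j+1)" and C'="V (j+1)" and S="Sm (r j + h j)" and T="Sm (r (j+1) + h (j+1))" and e="r j"])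
    show "inv_pair (d j) (U j) (V j)" "inv_pair (d (j - 1)) (U (j - 1)) (V (j - 1))"
      "inv_pair (d (j + 1)) (U (j + 1)) (V (j + 1))" using inv by auto
    show "\<And>v. matvec (d (j - 1)) (d j) (L j) v =
      matvec (d (j - 1)) (d (j - 1)) (U (j - 1)) (matvec (d (j - 1)) (d j) (Sm (r j + h j)) (matvec (d j) (d j) (V j) v))"
      unfolding L by (simp add: matvec_mm)
    show "\<And>v. matvec (d j) (d (j + 1)) (L (j + 1)) v =
      matvec (d j) (d j) (U j) (matvec (d j) (d (j + 1)) (Sm (r (j + 1) + h (j + 1))) (matvec (d (j + 1)) (d (j + 1)) (V (j + 1)) v))"
      unfolding L by (simp add: matvec_mm)
    show "r j + h j \<le> d j" using dj[of j] by simp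
    show "\<exists>u\<in>fvec (d (j + 1)). matvec (d j) (d (j + 1)) (Sm (r (j + 1) + h (j + 1))) u = w"
      if w: "w \<in> fvec (d j)" and Sw: "matvec (d (j - 1)) (d j) (Sm (r j + h j)) w = (\<lambda>_. 0)"
        and hw: "\<forall>i<h j. w (r j + i) = 0" for w
    proof -
      have w1: "w l = 0" if "r j \<le> l" for l
      proof (cases "l < r j + h j")
        case True then show ?thesis using hw that by (metis add_diff_inverse_nat add_less_cancel_left not_less)
      next
        case False
        show ?thesis
        proof (cases "l < d j")
          case True
          have "matvec (d (j - 1)) (d j) (Sm (r j + h j)) w (l - (r j + h j)) = 0" using Sw by simp
          moreover have "d (j - 1) \<ge> r (j - 1)" using dj[of "j - 1"] by simp
          ultimately have c1: "l - (r j + h j) < d (j - 1)" using True False dj[of j] by arith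
          have c2: "r j + h j + (l - (r j + h j)) = l" using False by arith
          show ?thesis using \<open>matvec _ _ _ w _ = 0\<close> True False c1 c2 dj[of j]
            by (simp add: matvec_Sm)
        next
          case False then show ?thesis using w by (simp add: fvec_def)
        qed
      qed
      define u where "u = (\<lambda>l. if r (j+1) + h (j+1) \<le> l \<and> l < d (j+1) then w (l - (r (j+1) + h (j+1))) else 0)"
      have "u \<in> fvec (d (j+1))" by (simp add: u_def fvec_def)
      moreover have "matvec (d j) (d (j + 1)) (Sm (r (j + 1) + h (j + 1))) u = w"
        using dj[of "j+1"] dj[of j] w1 w by (auto simp: fun_eq_iff matvec_Sm u_def fvec_def)
      ultimately show ?thesis by blast
    qed
    show "matvec (d j) (d (j + 1)) (Sm (r (j + 1) + h (j + 1))) u (r j + i) = 0" if "i < h j" for u i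
      using dj[of "j+1"] that by (simp add: matvec_Sm)
    show "matvec (d (j - 1)) (d j) (Sm (r j + h j)) w = (\<lambda>_. 0)"
      if "w \<in> fvec (d j)" "\<forall>l. l < r j \<or> r j + h j \<le> l \<longrightarrow> w l = 0" for w
      using that by (auto simp: fun_eq_iff matvec_Sm)
    show "matvec (d (j - 1)) (d j) (Sm (r j + h j)) (matvec (d j) (d (j + 1)) (Sm (r (j + 1) + h (j + 1))) u) = (\<lambda>_. 0)" for u
      using dj[of "j+1"] by (auto simp: fun_eq_iff matvec_Sm)
  qed
  have transpL: "transp (L j) = mm (d j) (transp (V j)) (mm (d (j-1)) (transp (Sm (r j + h j))) (transp (U (j-1))))" for j
    unfolding L by (simp add: transp_mm mm_assoc)
  have cohom: "int_cohomology d L j \<cong> Zgrp (h j)" for j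
    unfolding int_cohomology_def
  proof (rule gen_homology[where A="transp (V j)" and A'="transp (U j)" and B="transp (V (j+1))" and B'="transp (U (j+1))"
        and C="transp (V (j-1))" and C'="transp (U (j-1))" and S="transp (Sm (r (j+1) + h (j+1)))" and T="transp (Sm (r j + h j))" and e="r j"])
    show "inv_pair (d j) (transp (V j)) (transp (U j))" "inv_pair (d (j + 1)) (transp (V (j + 1))) (transp (U (j + 1)))"
      "inv_pair (d (j - 1)) (transp (V (j - 1))) (transp (U (j - 1)))" using inv inv_pair_transp by auto
    show "\<And>v. matvec (d (j + 1)) (d j) (transp (L (j + 1))) v =
      matvec (d (j + 1)) (d (j + 1)) (transp (V (j + 1))) (matvec (d (j + 1)) (d j) (transp (Sm (r (j + 1) + h (j + 1)))) (matvec (d j) (d j) (transp (U j)) v))"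
      unfolding transpL by (simp add: matvec_mm)
    show "\<And>v. matvec (d j) (d (j - 1)) (transp (L j)) v =
      matvec (d j) (d j) (transp (V j)) (matvec (d j) (d (j - 1)) (transp (Sm (r j + h j))) (matvec (d (j - 1)) (d (j - 1)) (transp (U (j - 1))) v))"
      unfolding transpL by (simp add: matvec_mm)
    show "r j + h j \<le> d j" using dj[of j] by simp
    show "\<exists>u\<in>fvec (d (j - 1)). matvec (d j) (d (j - 1)) (transp (Sm (r j + h j))) u = w"
      if w: "w \<in> fvec (d j)" and Sw: "matvec (d (j + 1)) (d j) (transp (Sm (r (j + 1) + h (j + 1)))) w = (\<lambda>_. 0)"
        and hw: "\<forall>i<h j. w (r j + i) = 0" for w
    proof -
      have w1: "w l = 0" if "l < r j + h j" for l
      proof (cases "l < r j")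
        case False then show ?thesis using hw that by (metis add_diff_inverse_nat add_less_cancel_left)
      next
        case True
        have "matvec (d (j + 1)) (d j) (transp (Sm (r (j + 1) + h (j + 1)))) w (r (j + 1) + h (j + 1) + l) = 0" using Sw by simp
        then show ?thesis using True dj[of j] dj[of "j+1"] by (simp add: matvec_tSm)
      qed
      define u where "u = (\<lambda>l. if l < d (j-1) then w (r j + h j + l) else 0)"
      have "u \<in> fvec (d (j-1))" by (simp add: u_def fvec_def)
      moreover have "matvec (d j) (d (j - 1)) (transp (Sm (r j + h j))) u = w"
      proof
        fix a show "matvec (d j) (d (j - 1)) (transp (Sm (r j + h j))) u a = w a"
          using dj[of j] dj[of "j - 1"] w1[of a] w
          by (cases "a < r j + h j + r (j - 1)") (auto simp: matvec_tSm u_def fvec_def)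
      qed
      ultimately show ?thesis by blast
    qed
    show "matvec (d j) (d (j - 1)) (transp (Sm (r j + h j))) u (r j + i) = 0" if "i < h j" for u i
      using that by (simp add: matvec_tSm)
    show "matvec (d (j + 1)) (d j) (transp (Sm (r (j + 1) + h (j + 1)))) w = (\<lambda>_. 0)"
      if "w \<in> fvec (d j)" "\<forall>l. l < r j \<or> r j + h j \<le> l \<longrightarrow> w l = 0" for w
      using that dj[of "j+1"] by (auto simp: fun_eq_iff matvec_tSm)
    show "matvec (d (j + 1)) (d j) (transp (Sm (r (j + 1) + h (j + 1)))) (matvec (d j) (d (j - 1)) (transp (Sm (r j + h j))) u) = (\<lambda>_. 0)" for u
      using dj[of "j+1"] by (auto simp: fun_eq_iff matvec_tSm)
  qed
  show ?thesis using cc hom cohom by blast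
qed

declare add_bit_eq_xor[simp del] mult_bit_eq_and[simp del]

interpretation F: vector_space "\<lambda>(c::bit) (v::nat \<Rightarrow> bit). (\<lambda>i. c * v i)"
  by unfold_locales (auto simp: fun_eq_iff algebra_simps)

lemma fun_sum_apply: "(\<Sum>a\<in>A. f a) (i::'b) = (\<Sum>a\<in>A. f a i)"
  by (induction A rule: infinite_finite_induct) auto

definition lc :: "(nat \<Rightarrow> bit) list \<Rightarrow> (nat \<Rightarrow> bit) \<Rightarrow> nat \<Rightarrow> bit" where
  "lc ws x = (\<lambda>i. \<Sum>l<length ws. x l * (ws ! l) i)"

lemma lc_sum: "lc ws x = (\<Sum>l<length ws. (\<lambda>i. x l * (ws ! l) i))"
  unfolding lc_def by (simp add: fun_eq_iff fun_sum_apply)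

lemma sum_set_nth:
  assumes "distinct ws"
  shows "(\<Sum>v\<in>set ws. g v) = (\<Sum>l<length ws. g (ws ! l))"
proof -
  have "set ws = (\<lambda>l. ws ! l) ` {..<length ws}" by (auto simp: in_set_conv_nth)
  moreover have "inj_on (\<lambda>l. ws ! l) {..<length ws}" using assms by (simp add: inj_on_def nth_eq_iff_index_eq)
  ultimately show ?thesis by (simp add: sum.reindex)
qed

lemma lc_indep:
  assumes "distinct ws" "F.independent (set ws)" "lc ws x = (\<lambda>_. 0)" "l < length ws"
  shows "x l = 0"
proof -
  define u where "u = (\<lambda>v. x (inv_into {..<length ws} (\<lambda>l. ws ! l) v))"
  have inj: "inj_on (\<lambda>l. ws ! l) {..<length ws}" using assms by (simp add: inj_on_def nth_eq_iff_index_eq)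
  have ul: "u (ws ! l) = x l" if "l < length ws" for l
    unfolding u_def using inv_into_f_f[OF inj] that by simp
  have "(\<Sum>v\<in>set ws. (\<lambda>i. u v * v i)) = (\<Sum>l<length ws. (\<lambda>i. u (ws ! l) * (ws ! l) i))"
    using sum_set_nth[OF assms(1)] .
  also have "\<dots> = (\<Sum>l<length ws. (\<lambda>i. x l * (ws ! l) i))" by (rule sum.cong) (auto simp: ul)
  also have "\<dots> = 0" using assms(3) by (simp add: lc_sum[symmetric] zero_fun_def)
  finally have "(\<Sum>v\<in>set ws. (\<lambda>i. u v * v i)) = 0" .
  then have "\<forall>v\<in>set ws. u v = 0" using assms(2) F.dependent_finite[of "set ws"] by auto
  then show ?thesis using ul[OF assms(4)] assms(4) by auto
qed

lemma lc_span:
  assumes "distinct ws" "v \<in> F.span (set ws)"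
  shows "\<exists>x. v = lc ws x"
proof -
  obtain u where "v = (\<Sum>v'\<in>set ws. (\<lambda>i. u v' * v' i))" using assms(2) F.span_finite[of "set ws"] by auto
  also have "\<dots> = (\<Sum>l<length ws. (\<lambda>i. u (ws ! l) * (ws ! l) i))" using sum_set_nth[OF assms(1)] .
  also have "\<dots> = lc ws (\<lambda>l. u (ws ! l))" by (simp add: lc_sum)
  finally show ?thesis by blast
qed

lemma lc_in_span: "lc ws x \<in> F.span (set ws)"
  unfolding lc_sum
  by (intro F.span_sum F.span_scale[where c="x _", simplified] F.span_base) (auto)

lemma indep_lc:
  assumes "distinct ws" "\<And>x. lc ws x = (\<lambda>_. 0) \<Longrightarrow> \<forall>l<length ws. x l = 0"
  shows "F.independent (set ws)"
proof -
  have "\<not> (\<exists>u. (\<exists>v\<in>set ws. u v \<noteq> 0) \<and> (\<Sum>v\<in>set ws. (\<lambda>i. u v * v i)) = 0)"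
  proof
    assume "\<exists>u. (\<exists>v\<in>set ws. u v \<noteq> 0) \<and> (\<Sum>v\<in>set ws. (\<lambda>i. u v * v i)) = 0"
    then obtain u v where v: "v \<in> set ws" "u v \<noteq> 0" and s: "(\<Sum>v\<in>set ws. (\<lambda>i. u v * v i)) = 0" by blast
    have "lc ws (\<lambda>l. u (ws ! l)) = (\<Sum>v\<in>set ws. (\<lambda>i. u v * v i))"
      unfolding lc_sum sum_set_nth[OF assms(1)] ..
    then have "lc ws (\<lambda>l. u (ws ! l)) = (\<lambda>_. 0)" using s by (simp add: zero_fun_def)
    then have "\<forall>l<length ws. u (ws ! l) = 0" using assms(2) by blast
    then show False using v by (auto simp: in_set_conv_nth)
  qed
  then show ?thesis using F.dependent_finite[of "set ws"] by auto
qed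

lemma distinct_lc:
  assumes "\<And>x. lc ws x = (\<lambda>_. 0) \<Longrightarrow> \<forall>l<length ws. x l = 0"
  shows "distinct ws"
proof (rule ccontr)
  assume "\<not> distinct ws"
  then obtain a b where ab: "a < length ws" "b < length ws" "a \<noteq> b" "ws ! a = ws ! b"
    by (auto simp: distinct_conv_nth)
  define x where "x = (\<lambda>l. if l = a \<or> l = b then 1 else (0::bit))"
  have "lc ws x = (\<lambda>_. 0)"
  proof
    fix i
    have "lc ws x i = (\<Sum>l<length ws. (if l = a then (ws ! a) i else 0) + (if l = b then (ws ! b) i else 0))"
      unfolding lc_def x_def by (rule sum.cong) (use ab in auto)
    also have "\<dots> = (ws ! a) i + (ws ! b) i" using ab by (simp add: sum.distrib)
    also have "\<dots> = 0" using ab by simp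
    finally show "lc ws x i = 0" .
  qed
  then have "\<forall>l<length ws. x l = 0" using assms by blast
  then show False using ab(1) by (auto simp: x_def dest: spec[of _ a])
qed

lemma sum_lessThan_add: "(\<Sum>l<(a::nat)+b. f l) = (\<Sum>l<a. f l) + (\<Sum>l<b. f (a + l))"
  by (induction b) (simp_all add: add_ac)

lemma lc_append: "lc (xs @ ys) x = (\<lambda>i. lc xs x i + lc ys (\<lambda>l. x (length xs + l)) i)"
proof
  fix i
  have "lc (xs @ ys) x i = (\<Sum>l<length xs + length ys. x l * ((xs @ ys) ! l) i)" by (simp add: lc_def)
  also have "\<dots> = (\<Sum>l<length xs. x l * ((xs @ ys) ! l) i) + (\<Sum>l<length ys. x (length xs + l) * ((xs @ ys) ! (length xs + l)) i)"
    by (rule sum_lessThan_add)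
  also have "\<dots> = lc xs x i + lc ys (\<lambda>l. x (length xs + l)) i"
    by (simp add: lc_def nth_append)
  finally show "lc (xs @ ys) x i = lc xs x i + lc ys (\<lambda>l. x (length xs + l)) i" .
qed

lemma matvec_lc: "matvec m n M (lc ws x) = lc (map (matvec m n M) ws) x"
  unfolding matvec_def lc_def
  by (auto simp: fun_eq_iff sum_distrib_left sum_distrib_right mult.left_commute intro: sum.swap)

lemma lc_zero_coeffs: "(\<And>l. l < length ws \<Longrightarrow> x l = 0) \<Longrightarrow> lc ws x = (\<lambda>_. 0)"
  unfolding lc_def by (auto simp: fun_eq_iff)

lemma lc_zero_vecs: "(\<And>v. v \<in> set ws \<Longrightarrow> v = (\<lambda>_. 0)) \<Longrightarrow> lc ws x = (\<lambda>_. 0)"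
  unfolding lc_def by (auto simp: fun_eq_iff intro!: sum.neutral)

definition ev :: "nat \<Rightarrow> nat \<Rightarrow> bit" where "ev i = (\<lambda>l. if l = i then 1 else 0)"

lemma lc_std: "lc (map ev [0..<n]) x = (\<lambda>i. if i < n then x i else 0)"
proof
  fix i
  have "lc (map ev [0..<n]) x i = (\<Sum>l<n. if l = i then x l else 0)"
    unfolding lc_def by (rule sum.cong) (auto simp: ev_def)
  then show "lc (map ev [0..<n]) x i = (if i < n then x i else 0)" by (simp add: sum.delta')
qed

lemma dim_fvec: "F.dim (fvec n) = n"
proof -
  let ?E = "map ev [0..<n]"
  have d: "distinct ?E" by (auto simp: distinct_map inj_on_def ev_def fun_eq_iff)
  have ind: "F.independent (set ?E)"
  proof (rule indep_lc[OF d])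
    fix x assume h: "lc ?E x = (\<lambda>_. 0)"
    show "\<forall>l<length ?E. x l = 0"
    proof (intro allI impI)
      fix l assume l: "l < length ?E"
      have "lc ?E x l = 0" using h by simp
      then show "x l = 0" using l by (simp add: lc_std)
    qed
  qed
  have sub: "set ?E \<subseteq> fvec n" by (auto simp: ev_def fvec_def)
  have sp: "fvec n \<subseteq> F.span (set ?E)"
  proof
    fix v :: "nat \<Rightarrow> bit" assume "v \<in> fvec n"
    then have "v = lc ?E v" by (auto simp: lc_std fvec_def fun_eq_iff)
    then show "v \<in> F.span (set ?E)" using lc_in_span by metis
  qed
  have "card (set ?E) = F.dim (fvec n)" using F.basis_card_eq_dim[OF sub sp ind] .
  moreover have "card (set ?E) = n" using distinct_card[OF d] by simp
  ultimately show ?thesis by simp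
qed

lemma fvec_span_std: "fvec n \<subseteq> F.span (set (map ev [0..<n]))"
proof
  fix v :: "nat \<Rightarrow> bit" assume "v \<in> fvec n"
  then have "v = lc (map ev [0..<n]) v" by (auto simp: lc_std fvec_def fun_eq_iff)
  then show "v \<in> F.span (set (map ev [0..<n]))" using lc_in_span by metis
qed

lemma card_basis_fvec:
  assumes "distinct ws" "set ws \<subseteq> fvec n" "fvec n \<subseteq> F.span (set ws)" "F.independent (set ws)"
  shows "length ws = n"
  using F.basis_card_eq_dim[OF assms(2,3,4)] dim_fvec distinct_card[OF assms(1)] by simp

lemma finite_indep_fvec:
  assumes "F.independent B" "B \<subseteq> fvec n"
  shows "finite B"
  using F.independent_span_bound[OF _ assms(1)] assms(2) fvec_span_std by blast

lemma subspace_cycles: "F.subspace (cycles m n (M::nat \<Rightarrow> nat \<Rightarrow> bit))"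
  unfolding F.subspace_def cycles_def fvec_def
  by (auto simp: plus_fun_def zero_fun_def matvec_def fun_eq_iff sum_distrib_left[symmetric] mult.left_commute distrib_left sum.distrib)

lemma subspace_boundaries: "F.subspace (boundaries n k (N::nat \<Rightarrow> nat \<Rightarrow> bit))"
proof -
  have "(\<lambda>i. matvec n k N u i + matvec n k N v i) \<in> boundaries n k N" if "u \<in> fvec k" "v \<in> fvec k" for u v
    using that unfolding boundaries_def matvec_add[symmetric] by (auto simp: fvec_def)
  moreover have "(\<lambda>i. c * matvec n k N u i) \<in> boundaries n k N" if "u \<in> fvec k" for u c
  proof -
    have "(\<lambda>i. c * matvec n k N u i) = matvec n k N (\<lambda>i. c * u i)"
      by (auto simp: matvec_def fun_eq_iff sum_distrib_left mult.left_commute)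
    then show ?thesis using that unfolding boundaries_def by (auto simp: fvec_def)
  qed
  moreover have "(\<lambda>_. 0) \<in> boundaries n k N"
    unfolding boundaries_def by (rule image_eqI[of _ _ "\<lambda>_. 0"]) (auto simp: fvec_def)
  ultimately show ?thesis
    unfolding F.subspace_def boundaries_def by (auto simp: plus_fun_def zero_fun_def)
qed

declare add_bit_eq_xor[simp del] mult_bit_eq_and[simp del]

lemma lc_cong: "(\<And>l. l < length ws \<Longrightarrow> x l = x' l) \<Longrightarrow> lc ws x = lc ws x'"
  unfolding lc_def by (auto simp: fun_eq_iff intro!: sum.cong)

lemma lc_fvec: "set ws \<subseteq> fvec n \<Longrightarrow> lc ws x \<in> fvec n"
  unfolding lc_def fvec_def by (auto intro!: sum.neutral dest!: nth_mem)

lemma bnd_sub_cyc: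
  assumes cc: "is_chain_complex d (D :: int \<Rightarrow> nat \<Rightarrow> nat \<Rightarrow> bit)"
  shows "boundaries (d j) (d (j+1)) (D (j+1)) \<subseteq> cycles (d (j - 1)) (d j) (D j)"
proof
  fix v assume "v \<in> boundaries (d j) (d (j+1)) (D (j+1))"
  then obtain u where u: "u \<in> fvec (d (j+1))" "v = matvec (d j) (d (j+1)) (D (j+1)) u"
    unfolding boundaries_def by auto
  have "matvec (d (j - 1)) (d j) (D j) v = matvec (d (j - 1)) (d (j+1)) (mm (d j) (D j) (D (j+1))) u"
    by (simp add: u matvec_mm)
  also have "\<dots> = (\<lambda>_. 0)"
    using cc unfolding is_chain_complex_def matvec_def mm_def by (auto simp: fun_eq_iff)
  finally show "v \<in> cycles (d (j - 1)) (d j) (D j)" using u by (simp add: cycles_def)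
qed

lemma cyc_fvec: "cycles m n M \<subseteq> fvec n" unfolding cycles_def by auto
lemma bnd_fvec: "boundaries n k N \<subseteq> fvec n" unfolding boundaries_def by auto

lemma ex_basis:
  assumes "X \<subseteq> fvec n"
  shows "\<exists>xs. distinct xs \<and> F.independent (set xs) \<and> set xs \<subseteq> X \<and> X \<subseteq> F.span (set xs)"
proof -
  obtain B where B: "B \<subseteq> X" "F.independent B" "X \<subseteq> F.span B" using F.maximal_independent_subset by blast
  have "finite B" using finite_indep_fvec[OF B(2)] B(1) assms by blast
  then obtain xs where "set xs = B" "distinct xs" using finite_distinct_list by blast
  then show ?thesis using B by blast
qed

lemma ex_extend:
  assumes "X \<subseteq> fvec n" "distinct xs" "F.independent (set xs)" "set xs \<subseteq> X"
  shows "\<exists>ys. distinct (xs @ ys) \<and> F.independent (set (xs @ ys)) \<and> set (xs @ ys) \<subseteq> X \<and> X \<subseteq> F.span (set (xs @ ys))"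
proof -
  obtain B where B: "set xs \<subseteq> B" "B \<subseteq> X" "F.independent B" "X \<subseteq> F.span B"
    using F.maximal_independent_subset_extend[OF assms(4,3)] by blast
  have "finite B" using finite_indep_fvec[OF B(3)] B(2) assms by blast
  then obtain ys where ys: "set ys = B - set xs" "distinct ys" using finite_distinct_list[of "B - set xs"] by auto
  have "set (xs @ ys) = B" using ys B by auto
  moreover have "distinct (xs @ ys)" using ys assms(2) by auto
  ultimately show ?thesis using B by metis
qed

lemma ex_pre:
  assumes "set xs \<subseteq> boundaries m n M"
  shows "\<exists>cs. length cs = length xs \<and> (\<forall>t<length xs. cs ! t \<in> fvec n \<and> matvec m n M (cs ! t) = xs ! t)"
proof -
  have "\<forall>x\<in>set xs. \<exists>c. c \<in> fvec n \<and> matvec m n M c = x" using assms unfolding boundaries_def by auto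
  then have "\<forall>t<length xs. \<exists>c. c \<in> fvec n \<and> matvec m n M c = xs ! t" by auto
  then obtain f where f: "\<forall>t<length xs. f t \<in> fvec n \<and> matvec m n M (f t) = xs ! t" by metis
  show ?thesis by (rule exI[of _ "map f [0..<length xs]"]) (use f in auto)
qed

lemma partA:
  assumes cc: "is_chain_complex d (D :: int \<Rightarrow> nat \<Rightarrow> nat \<Rightarrow> bit)"
  shows "\<exists>r h P. \<forall>j. d j = r j + h j + r (j - 1) \<and> injm (d j) (P j) \<and> betti_F2 d D j = h j \<and>
     (\<forall>i<d (j - 1). \<forall>l<d j. mm (d j) (D j) (P j) i l = mm (d (j - 1)) (P (j - 1)) (Sm (r j + h j)) i l)"
proof -
  define Bj where "Bj = (\<lambda>j. boundaries (d j) (d (j+1)) (D (j+1)))"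
  define Zj where "Zj = (\<lambda>j. cycles (d (j - 1)) (d j) (D j))"
  have BZ: "Bj j \<subseteq> Zj j" for j unfolding Bj_def Zj_def using bnd_sub_cyc[OF cc] .
  have Zf: "Zj j \<subseteq> fvec (d j)" for j unfolding Zj_def by (rule cyc_fvec)
  have Bf: "Bj j \<subseteq> fvec (d j)" for j unfolding Bj_def by (rule bnd_fvec)
  define bs where "bs = (\<lambda>j. SOME xs. distinct xs \<and> F.independent (set xs) \<and> set xs \<subseteq> Bj j \<and> Bj j \<subseteq> F.span (set xs))"
  have bs: "distinct (bs j) \<and> F.independent (set (bs j)) \<and> set (bs j) \<subseteq> Bj j \<and> Bj j \<subseteq> F.span (set (bs j))" for j
    unfolding bs_def by (rule someI_ex) (rule ex_basis[OF Bf])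
  define hs where "hs = (\<lambda>j. SOME ys. distinct (bs j @ ys) \<and> F.independent (set (bs j @ ys)) \<and> set (bs j @ ys) \<subseteq> Zj j \<and> Zj j \<subseteq> F.span (set (bs j @ ys)))"
  have hs: "distinct (bs j @ hs j) \<and> F.independent (set (bs j @ hs j)) \<and> set (bs j @ hs j) \<subseteq> Zj j \<and> Zj j \<subseteq> F.span (set (bs j @ hs j))" for j
    unfolding hs_def by (rule someI_ex) (rule ex_extend[OF Zf], use bs[of j] BZ[of j] in auto)
  define cs where "cs = (\<lambda>j. SOME cs. length cs = length (bs (j - 1)) \<and> (\<forall>t<length (bs (j - 1)). cs ! t \<in> fvec (d j) \<and> matvec (d (j - 1)) (d j) (D j) (cs ! t) = bs (j - 1) ! t))"
  have cs: "length (cs j) = length (bs (j - 1)) \<and> (\<forall>t<length (bs (j - 1)). cs j ! t \<in> fvec (d j) \<and> matvec (d (j - 1)) (d j) (D j) (cs j ! t) = bs (j - 1) ! t)" for j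
  proof -
    have "set (bs (j - 1)) \<subseteq> boundaries (d (j - 1)) (d j) (D j)" using bs[of "j - 1"] by (simp add: Bj_def)
    then show ?thesis unfolding cs_def by (rule someI_ex[OF ex_pre])
  qed
  define A where "A = (\<lambda>j. bs j @ hs j)"
  define w where "w = (\<lambda>j. A j @ cs j)"
  define r where "r = (\<lambda>j. length (bs j))"
  define h where "h = (\<lambda>j. length (hs j))"
  have Acyc: "matvec (d (j - 1)) (d j) (D j) v = (\<lambda>_. 0)" if "v \<in> set (A j)" for j v
    using hs[of j] that unfolding A_def Zj_def cycles_def by auto
  have mapcs: "map (matvec (d (j - 1)) (d j) (D j)) (cs j) = bs (j - 1)" for j
    using cs[of j] by (intro nth_equalityI) auto
  have csf: "set (cs j) \<subseteq> fvec (d j)" for j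
    using cs[of j] by (auto simp: in_set_conv_nth)
  have W1: "set (w j) \<subseteq> fvec (d j)" for j
    using hs[of j] Zf[of j] csf[of j] unfolding w_def A_def by auto
  have W2: "\<forall>l<length (w j). x l = 0" if x: "lc (w j) x = (\<lambda>_. 0)" for j x
  proof -
    define y where "y = (\<lambda>l. x (length (A j) + l))"
    have sum0: "(\<lambda>i. lc (A j) x i + lc (cs j) y i) = (\<lambda>_. 0)"
      using x unfolding w_def lc_append y_def .
    have "matvec (d (j - 1)) (d j) (D j) (\<lambda>i. lc (A j) x i + lc (cs j) y i) = (\<lambda>_. 0)"
      unfolding sum0 by simp
    then have "(\<lambda>i. lc (map (matvec (d (j - 1)) (d j) (D j)) (A j)) x i + lc (bs (j - 1)) y i) = (\<lambda>_. 0)"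
      unfolding matvec_add matvec_lc mapcs .
    moreover have "lc (map (matvec (d (j - 1)) (d j) (D j)) (A j)) x = (\<lambda>_. 0)"
      by (rule lc_zero_vecs) (auto simp: Acyc)
    ultimately have "lc (bs (j - 1)) y = (\<lambda>_. 0)" by (simp add: fun_eq_iff)
    then have y0: "y t = 0" if "t < length (bs (j - 1))" for t
      using lc_indep[of "bs (j - 1)" y t] bs[of "j - 1"] that by auto
    have "lc (cs j) y = (\<lambda>_. 0)" by (rule lc_zero_coeffs) (use y0 cs[of j] in auto)
    then have "lc (A j) x = (\<lambda>_. 0)" using sum0 by (simp add: fun_eq_iff)
    then have x0: "x l = 0" if "l < length (A j)" for l
      using lc_indep[of "A j" x l] hs[of j] that unfolding A_def by auto
    show ?thesis
    proof (intro allI impI)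
      fix l assume l: "l < length (w j)"
      show "x l = 0"
      proof (cases "l < length (A j)")
        case True then show ?thesis using x0 by simp
      next
        case False
        then have "x l = y (l - length (A j))" by (simp add: y_def)
        also have "\<dots> = 0" using y0 l False cs[of j] by (simp add: w_def)
        finally show ?thesis .
      qed
    qed
  qed
  have W3: "\<exists>x. v = lc (w j) x" if v: "v \<in> fvec (d j)" for j v
  proof -
    let ?M = "matvec (d (j - 1)) (d j) (D j)"
    have "?M v \<in> Bj (j - 1)" using v by (simp add: Bj_def boundaries_def)
    then have "?M v \<in> F.span (set (bs (j - 1)))" using bs[of "j - 1"] by blast
    then obtain y where y: "?M v = lc (bs (j - 1)) y" using lc_span bs[of "j - 1"] by blast
    define v' where "v' = (\<lambda>i. v i + lc (cs j) y i)"
    have "?M v' = (\<lambda>i. ?M v i + lc (bs (j - 1)) y i)"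
      unfolding v'_def matvec_add matvec_lc mapcs ..
    also have "\<dots> = (\<lambda>_. 0)" unfolding y by simp
    finally have "v' \<in> Zj j" using v lc_fvec[OF csf[of j], of y]
      by (auto simp: Zj_def cycles_def v'_def fvec_def)
    then have "v' \<in> F.span (set (A j))" using hs[of j] by (auto simp: A_def)
    then obtain x1 where x1: "v' = lc (A j) x1" using lc_span hs[of j] unfolding A_def by blast
    define x where "x = (\<lambda>l. if l < length (A j) then x1 l else y (l - length (A j)))"
    have "lc (w j) x = (\<lambda>i. lc (A j) x i + lc (cs j) (\<lambda>l. x (length (A j) + l)) i)"
      unfolding w_def lc_append ..
    also have "lc (A j) x = lc (A j) x1" by (rule lc_cong) (simp add: x_def)
    also have "(\<lambda>l. x (length (A j) + l)) = y" by (simp add: x_def fun_eq_iff)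
    also have "(\<lambda>i. lc (A j) x1 i + lc (cs j) y i) = (\<lambda>i. v' i + lc (cs j) y i)" unfolding x1 ..
    also have "\<dots> = v" by (simp add: v'_def add.assoc fun_eq_iff)
    finally show ?thesis by metis
  qed
  have wlen: "length (w j) = d j" for j
  proof (rule card_basis_fvec)
    show dw: "distinct (w j)" using W2 by (intro distinct_lc) blast
    show "set (w j) \<subseteq> fvec (d j)" by (rule W1)
    show "fvec (d j) \<subseteq> F.span (set (w j))" using W3 lc_in_span by blast
    show "F.independent (set (w j))" using W2 dw by (intro indep_lc) blast+
  qed
  have dj: "d j = r j + h j + r (j - 1)" for j
    using wlen[of j] cs[of j] by (simp add: w_def A_def r_def h_def)
  have betti: "betti_F2 d D j = h j" for j
  proof -
    have "Zj j = F.span (set (A j))"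
      using hs[of j] F.span_minimal[of "set (A j)" "Zj j"] subspace_cycles unfolding A_def Zj_def by auto
    then have dZ: "F.dim (Zj j) = length (A j)"
      using F.dim_span_eq_card_independent[of "set (A j)"] hs[of j] distinct_card[of "A j"] unfolding A_def by simp
    have "Bj j = F.span (set (bs j))"
      using bs[of j] F.span_minimal[of "set (bs j)" "Bj j"] subspace_boundaries unfolding Bj_def by auto
    then have dB: "F.dim (Bj j) = length (bs j)"
      using F.dim_span_eq_card_independent[of "set (bs j)"] bs[of j] distinct_card[of "bs j"] by simp
    show ?thesis using dZ dB by (simp add: betti_F2_def Zj_def Bj_def A_def h_def)
  qed
  define P where "P = (\<lambda>j i l. if l < d j then (w j ! l) i else (0::bit))"
  have inj: "injm (d j) (P j)" for j
    unfolding injm_def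
  proof (intro allI impI)
    fix x :: "nat \<Rightarrow> bit" and l0 assume xz: "\<forall>l\<ge>d j. x l = 0" and h0: "\<forall>i<d j. (\<Sum>l<d j. P j i l * x l) = 0"
    have "lc (w j) x = (\<lambda>_. 0)"
    proof
      fix i show "lc (w j) x i = 0"
      proof (cases "i < d j")
        case True
        have "lc (w j) x i = (\<Sum>l<d j. P j i l * x l)"
          unfolding lc_def wlen by (rule sum.cong) (auto simp: P_def mult.commute)
        then show ?thesis using h0 True by simp
      next
        case False
        then show ?thesis using lc_fvec[OF W1[of j], of x] by (simp add: fvec_def)
      qed
    qed
    then have "\<forall>l<d j. x l = 0" using W2[of j x] wlen by simp
    then show "x l0 = 0" using xz by (cases "l0 < d j") auto
  qed
  have rel: "mm (d j) (D j) (P j) i l = mm (d (j - 1)) (P (j - 1)) (Sm (r j + h j)) i l"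
    if i: "i < d (j - 1)" and l: "l < d j" for i l j
  proof -
    have "mm (d j) (D j) (P j) i l = matvec (d (j - 1)) (d j) (D j) (w j ! l) i"
      unfolding mm_def matvec_def using i l by (simp add: P_def)
    also have "\<dots> = mm (d (j - 1)) (P (j - 1)) (Sm (r j + h j)) i l"
    proof (cases "l < r j + h j")
      case True
      then have lA: "l < length (A j)" by (simp add: A_def r_def h_def)
      then have "w j ! l = A j ! l" by (simp add: w_def nth_append)
      then have "w j ! l \<in> set (A j)" using lA by simp
      then have "matvec (d (j - 1)) (d j) (D j) (w j ! l) i = 0" using Acyc by simp
      moreover have "mm (d (j - 1)) (P (j - 1)) (Sm (r j + h j)) i l = 0"
        unfolding mm_def using True by (intro sum.neutral) (auto simp: Sm_def)
      ultimately show ?thesis by simp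
    next
      case False
      define t where "t = l - (r j + h j)"
      have lt: "l = r j + h j + t" using False by (simp add: t_def)
      have t: "t < r (j - 1)" using l dj[of j] lt by simp
      have "w j ! l = cs j ! t" using lt by (simp add: w_def A_def nth_append r_def h_def)
      then have "matvec (d (j - 1)) (d j) (D j) (w j ! l) i = (bs (j - 1) ! t) i"
        using cs[of j] t by (simp add: r_def)
      moreover have "mm (d (j - 1)) (P (j - 1)) (Sm (r j + h j)) i l = P (j - 1) i t"
      proof -
        have "mm (d (j - 1)) (P (j - 1)) (Sm (r j + h j)) i l = (\<Sum>b<d (j - 1). if b = t then P (j - 1) i b else 0)"
          unfolding mm_def by (rule sum.cong) (auto simp: Sm_def lt)
        also have "\<dots> = P (j - 1) i t" using t dj[of "j - 1"] by (simp add: sum.delta')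
        finally show ?thesis .
      qed
      moreover have "P (j - 1) i t = (bs (j - 1) ! t) i"
        using t dj[of "j - 1"] by (simp add: P_def w_def A_def nth_append r_def)
      ultimately show ?thesis by simp
    qed
    finally show ?thesis .
  qed
  show ?thesis using dj inj betti rel by blast
qed

lemma red_Sm: "red (Sm E) = Sm E"
  unfolding red_def Sm_def by (simp add: fun_eq_iff)

theorem mainTheorem8:
  fixes d :: "int \<Rightarrow> nat" and D :: "int \<Rightarrow> nat \<Rightarrow> nat \<Rightarrow> bit"
  assumes "is_chain_complex d D"
  shows "\<exists>L. is_lift d D L \<and>
           (\<forall>j. int_homology d L j \<cong> Zgrp (betti_F2 d D j) \<and>
                int_cohomology d L j \<cong> Zgrp (betti_F2 d D j))"
proof -
  obtain r h P where RHP: "\<forall>j. d j = r j + h j + r (j - 1) \<and> injm (d j) (P j) \<and> betti_F2 d D j = h j \<and>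
     (\<forall>i<d (j - 1). \<forall>l<d j. mm (d j) (D j) (P j) i l = mm (d (j - 1)) (P (j - 1)) (Sm (r j + h j)) i l)"
    using partA[OF assms] by blast
  have dj: "\<And>j. d j = r j + h j + r (j - 1)" using RHP by blast
  have injP: "\<And>j. injm (d j) (P j)" using RHP by blast
  have bet: "\<And>j. betti_F2 d D j = h j" using RHP by blast
  have rel: "\<And>j i l. i < d (j - 1) \<Longrightarrow> l < d j \<Longrightarrow> mm (d j) (D j) (P j) i l = mm (d (j - 1)) (P (j - 1)) (Sm (r j + h j)) i l"
    using RHP by blast
  have "\<forall>j. \<exists>UV. inv_pair (d j) (fst UV) (snd UV) \<and> (\<forall>i<d j. \<forall>k<d j. red (fst UV) i k = P j i k)"
  proof
    fix j
    obtain U V where "inv_pair (d j) U V \<and> (\<forall>i<d j. \<forall>k<d j. red U i k = P j i k)"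
      using lift_unimodular[OF injP[of j]] by blast
    then show "\<exists>UV. inv_pair (d j) (fst UV) (snd UV) \<and> (\<forall>i<d j. \<forall>k<d j. red (fst UV) i k = P j i k)"
      by (intro exI[of _ "(U, V)"]) simp
  qed
  then obtain f where f: "\<forall>j. inv_pair (d j) (fst (f j)) (snd (f j)) \<and> (\<forall>i<d j. \<forall>k<d j. red (fst (f j)) i k = P j i k)"
    by (metis choice)
  define U where "U = (\<lambda>j. fst (f j))"
  define V where "V = (\<lambda>j. snd (f j))"
  define L where "L = (\<lambda>j. mm (d (j - 1)) (U (j - 1)) (mm (d j) (Sm (r j + h j)) (V j)))"
  have inv: "inv_pair (d j) (U j) (V j)" for j using f by (simp add: U_def V_def)
  have redU: "red (U j) i k = P j i k" if "i < d j" "k < d j" for i j k using f that by (simp add: U_def)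
  have B: "is_chain_complex d L \<and> (\<forall>j. int_homology d L j \<cong> Zgrp (h j) \<and> int_cohomology d L j \<cong> Zgrp (h j))"
    by (rule partB[OF dj inv L_def])
  have PW: "mm (d j) (P j) (red (V j)) l k = idm l k" if "l < d j" "k < d j" for j l k
  proof -
    have "mm (d j) (P j) (red (V j)) l k = mm (d j) (red (U j)) (red (V j)) l k"
      by (rule mm_cong) (use that redU in auto)
    also have "\<dots> = red (mm (d j) (U j) (V j)) l k" by (simp add: red_mm)
    also have "\<dots> = red idm l k" using inv[of j] that by (simp add: inv_pair_def red_def)
    finally show ?thesis by (simp add: red_idm)
  qed
  have lift: "of_int (L j i k) = D j i k" if i: "i < d (j - 1)" and k: "k < d j" for j i k
  proof -
    let ?S = "Sm (r j + h j) :: nat \<Rightarrow> nat \<Rightarrow> bit"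
    have r1: "red (L j) = mm (d (j - 1)) (red (U (j - 1))) (mm (d j) ?S (red (V j)))"
      by (simp only: L_def red_mm red_Sm)
    have "of_int (L j i k) = red (L j) i k" by (simp add: red_def)
    also have "\<dots> = mm (d (j - 1)) (red (U (j - 1))) (mm (d j) ?S (red (V j))) i k" by (simp only: r1)
    also have "\<dots> = mm (d (j - 1)) (P (j - 1)) (mm (d j) ?S (red (V j))) i k"
      by (rule mm_cong) (use i redU in auto)
    also have "\<dots> = mm (d j) (mm (d (j - 1)) (P (j - 1)) ?S) (red (V j)) i k"
      by (simp add: mm_assoc)
    also have "\<dots> = mm (d j) (mm (d j) (D j) (P j)) (red (V j)) i k"
      by (rule mm_cong) (use rel[OF i] in auto)
    also have "\<dots> = mm (d j) (D j) (mm (d j) (P j) (red (V j))) i k"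
      by (simp add: mm_assoc)
    also have "\<dots> = mm (d j) (D j) idm i k"
      by (rule mm_cong) (use k PW in auto)
    also have "\<dots> = D j i k" using k by (simp add: mm_idm_right)
    finally show ?thesis .
  qed
  have "is_lift d D L" unfolding is_lift_def using lift B by blast
  then show ?thesis using B by (intro exI[of _ L]) (simp add: bet)
qed

end
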